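(* A quadratical quasigroup of order $9$ is not $k$-translatable, for any $k\in\{1,\dots,8\}$, with respect to any ordering of its elements.
   Context: A quadratical quasigroup is a quasigroup satisfying $xy\cdot x=zx\cdot yz$ for all $x,y,z$ (equivalently, a groupoid satisfying $x\cdot x=x$, $yx\cdot xy=x$, $xy\cdot zw=xz\cdot yw$). A finite groupoid with ordering $q_1,\dots,q_n$ is $k$-translatable ($1\le k<n$) with respect to this ordering if $q_i\cdot q_j=q_{i-1}\cdot q_{j-k}$ for all $i\in\{2,\dots,n\}$, $j\in\{1,\dots,n\}$, indices taken modulo $n$ in $\{1,\dots,n\}$. *)

theory Defs
  imports Main
begin

definition closed_op :: "'a set \<Rightarrow> ('a \<Rightarrow> 'a \<Rightarrow> 'a) \<Rightarrow> bool" where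
  "closed_op Q m \<longleftrightarrow> (\<forall>x\<in>Q. \<forall>y\<in>Q. m x y \<in> Q)"

definition quasigroup :: "'a set \<Rightarrow> ('a \<Rightarrow> 'a \<Rightarrow> 'a) \<Rightarrow> bool" where
  "quasigroup Q m \<longleftrightarrow> closed_op Q m \<and>
     (\<forall>a\<in>Q. \<forall>b\<in>Q. (\<exists>!x. x \<in> Q \<and> m a x = b) \<and> (\<exists>!y. y \<in> Q \<and> m y a = b))"

definition quadratical :: "'a set \<Rightarrow> ('a \<Rightarrow> 'a \<Rightarrow> 'a) \<Rightarrow> bool" where
  "quadratical Q m \<longleftrightarrow> quasigroup Q m \<and>
     (\<forall>x\<in>Q. \<forall>y\<in>Q. \<forall>z\<in>Q. m (m x y) x = m (m z x) (m y z))"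

text \<open>An ordering q_1..q_n of Q is encoded 0-indexed as a bijection q : {0..<n} -> Q
  (q i here is q_{i+1} of the paper). k-translatability: q_i q_j = q_{i-1} q_{j-k},
  for paper indices i in {2..n}, j in {1..n}, indices mod n.\<close>

definition k_translatable :: "'a set \<Rightarrow> ('a \<Rightarrow> 'a \<Rightarrow> 'a) \<Rightarrow> (nat \<Rightarrow> 'a) \<Rightarrow> nat \<Rightarrow> bool" where
  "k_translatable Q m q k \<longleftrightarrow> (let n = card Q in
     finite Q \<and> bij_betw q {..<n} Q \<and> 1 \<le> k \<and> k < n \<and>
     (\<forall>i\<in>{1..<n}. \<forall>j<n. m (q i) (q j) = m (q (i - 1)) (q ((j + n - k) mod n))))"

end

theory Submission
  imports Defs
begin

lemma main9:
  fixes q :: "nat \<Rightarrow> 'a" and k :: nat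
  assumes quad: "quadratical Q m" and bij: "bij_betw q {..<9} Q" and k: "1 \<le> k" "k \<le> 8"
  and H: "\<forall>i\<in>{1..<9}. \<forall>j<9. m (q i) (q j) = m (q (i - 1)) (q ((j + 9 - k) mod 9))"
  shows False
proof -
  have qQ: "\<And>i. i<9 \<Longrightarrow> q i \<in> Q" using bij by (auto simp: bij_betw_def)
  have qinj: "\<And>i j. i<9 \<Longrightarrow> j<9 \<Longrightarrow> q i = q j \<Longrightarrow> i = j"
    using bij by (auto simp: bij_betw_def inj_on_def)
  have qg: "quasigroup Q m" and qi: "\<forall>x\<in>Q. \<forall>y\<in>Q. \<forall>z\<in>Q. m (m x y) x = m (m z x) (m y z)"
    using quad by (auto simp: quadratical_def)
  have cl: "\<And>x y. x\<in>Q \<Longrightarrow> y\<in>Q \<Longrightarrow> m x y \<in> Q" using qg by (auto simp: quasigroup_def closed_op_def)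
  have lc: "\<And>a x y. a\<in>Q \<Longrightarrow> x\<in>Q \<Longrightarrow> y\<in>Q \<Longrightarrow> m a x = m a y \<Longrightarrow> x = y"
  proof -
    fix a x y assume a: "a\<in>Q" "x\<in>Q" "y\<in>Q" "m a x = m a y"
    have "\<exists>!z. z \<in> Q \<and> m a z = m a y" using qg a cl by (auto simp: quasigroup_def)
    thus "x = y" using a by blast
  qed
  have rc: "\<And>a x y. a\<in>Q \<Longrightarrow> x\<in>Q \<Longrightarrow> y\<in>Q \<Longrightarrow> m x a = m y a \<Longrightarrow> x = y"
  proof -
    fix a x y assume a: "a\<in>Q" "x\<in>Q" "y\<in>Q" "m x a = m y a"
    have "\<exists>!z. z \<in> Q \<and> m z a = m y a" using qg a cl by (auto simp: quasigroup_def)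
    thus "x = y" using a by blast
  qed
  have idem: "\<And>x. x\<in>Q \<Longrightarrow> m x x = x"
  proof -
    fix x assume x: "x\<in>Q"
    have "m (m x x) x = m (m x x) (m x x)" using qi x by blast
    thus "m x x = x" using lc[of "m x x" x "m x x"] x cl by auto
  qed
  have chain: "\<And>j. j<9 \<Longrightarrow> m (q i) (q j) = m (q 0) (q (nat ((int j - int i * int k) mod 9)))"
    if "i<9" for i
    using that
  proof (induction i)
    case 0
    then show ?case by simp
  next
    case (Suc i)
    let ?j = "(j + 9 - k) mod 9"
    have "m (q (Suc i)) (q j) = m (q i) (q ?j)" using H Suc by auto
    also have "\<dots> = m (q 0) (q (nat ((int ?j - int i * int k) mod 9)))"
      using Suc by simp
    also have "int ?j = (int j + 9 - int k) mod 9" using k by (simp add: of_nat_diff zmod_int)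
    hence "nat ((int ?j - int i * int k) mod 9) = nat ((int j - int (Suc i) * int k) mod 9)"
    proof -
      assume e: "int ?j = (int j + 9 - int k) mod 9"
      have "(int ?j - int i * int k) mod 9 = ((int j + 9 - int k) - int i * int k) mod 9"
        unfolding e by (simp add: mod_diff_left_eq)
      also have "\<dots> = (int j - int (Suc i) * int k + 9) mod 9" by (simp add: algebra_simps)
      also have "\<dots> = (int j - int (Suc i) * int k) mod 9" by simp
      finally show ?thesis by simp
    qed
    finally show ?case .
  qed
  define f where "f t = m (q 0) (q t)" for t
  have P: "\<And>i j. i<9 \<Longrightarrow> j<9 \<Longrightarrow> m (q i) (q j) = f (nat ((int j - int i * int k) mod 9))"
    unfolding f_def by (rule chain)
  have I: "\<And>i. i<9 \<Longrightarrow> f (nat ((int i - int i * int k) mod 9)) = q i"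
    using P idem qQ by metis
  have Q0: "m (m (q 0) (q 0)) (q 0) = m (m (q 1) (q 0)) (m (q 0) (q 1))"
    using qi[rule_format, of "q 0" "q 0" "q 1"] qQ[of 0] qQ[of 1] by simp
  have "k=1 \<or> k=2 \<or> k=3 \<or> k=4 \<or> k=5 \<or> k=6 \<or> k=7 \<or> k=8" using k by arith
  moreover {
    assume kk: "k=1"
    have "q 0 = q 1" using I[of 0] I[of 1] unfolding kk by simp
    hence False using qinj[of 0 1] by simp }
  moreover {
    assume kk: "k=4"
    have "q 0 = q 3" using I[of 0] I[of 3] unfolding kk by simp
    hence False using qinj[of 0 3] by simp }
  moreover {
    assume kk: "k=7"
    have "q 0 = q 3" using I[of 0] I[of 3] unfolding kk by simp
    hence False using qinj[of 0 3] by simp }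
  moreover {
    assume kk: "k=3"
    have "m (q 3) (q 0) = m (q 0) (q 0)" using P[of 3 0] P[of 0 0] unfolding kk by simp
    hence False using rc[of "q 0" "q 3" "q 0"] qQ[of 0] qQ[of 3] qinj[of 3 0] by simp }
  moreover {
    assume kk: "k=6"
    have "m (q 3) (q 0) = m (q 0) (q 0)" using P[of 3 0] P[of 0 0] unfolding kk by simp
    hence False using rc[of "q 0" "q 3" "q 0"] qQ[of 0] qQ[of 3] qinj[of 3 0] by simp }
  moreover {
    fix kv :: nat assume kk: "k = kv" "kv = 2 \<or> kv = 5 \<or> kv = 8"
    have Is: "\<And>i. i < 9 \<Longrightarrow> f (nat ((int i - int i * int kv) mod 9)) = q i" using I kk by simp
    have Ps: "\<And>i j. i<9 \<Longrightarrow> j<9 \<Longrightarrow> m (q i) (q j) = f (nat ((int j - int i * int kv) mod 9))"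
      using P kk by simp
    have "q 0 = q 5" using kk(2)
    proof (elim disjE)
      assume "kv = 2" thus ?thesis using Q0 Ps Is[of 0] Is[of 1] Is[of 2] Is[of 3] Is[of 4]
          Is[of 5] Is[of 6] Is[of 7] Is[of 8] by simp
    next
      assume "kv = 5" thus ?thesis using Q0 Ps Is[of 0] Is[of 1] Is[of 2] Is[of 3] Is[of 4]
          Is[of 5] Is[of 6] Is[of 7] Is[of 8] by simp
    next
      assume "kv = 8" thus ?thesis using Q0 Ps Is[of 0] Is[of 1] Is[of 2] Is[of 3] Is[of 4]
          Is[of 5] Is[of 6] Is[of 7] Is[of 8] by simp
    qed
    hence False using qinj[of 0 5] by simp }
  ultimately show False by blast
qed

theorem corollary8p16:
  fixes Q :: "'a set" and m :: "'a \<Rightarrow> 'a \<Rightarrow> 'a"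
  assumes "quadratical Q m" and "finite Q" and "card Q = 9"
  shows "\<forall>q k. k \<in> {1..8} \<and> bij_betw q {..<9} Q \<longrightarrow> \<not> k_translatable Q m q k"
proof (intro allI impI notI)
  fix q k assume a: "k \<in> {1..8} \<and> bij_betw q {..<9} Q" and t: "k_translatable Q m q k"
  show False
    apply (rule main9[OF assms(1), of q k])
    using a t assms(3) by (auto simp: k_translatable_def Let_def)
qed

end
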